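(* In the converse setting below, \[ \sum_{i=1}^n H(X_i\mid Y_1^{i-1}Y_2^{i-1}S^{i-1}W_1)\ \ge\ \frac{1-\delta_2}{(1-\delta_1)\delta_2}\sum_{i=1}^n I(X_i;Y_1^{i-1}\mid Y_2^{i-1}S^{i-1}W_1). \]
   Context: Converse setting. $0<\delta_1,\delta_2<1$. Messages $W_1$ uniform on $\mathbb{F}_q^{LN_1}$ and $W_2$ uniform on $\mathbb{F}_q^{LN_2}$, and Alice's private randomness $\Theta_A$, are mutually independent. Channel states $S_1,\dots,S_n\in\{B,C,BC,\emptyset\}$ are i.i.d., independent of $(W_1,W_2,\Theta_A)$, with Bob receiving with probability $1-\delta_1$ and Calvin with probability $1-\delta_2$, independently. Inputs $X_i=f_i(W_1,W_2,\Theta_A,S^{i-1})\in\mathbb{F}_q^L$ (honest acknowledgments). Outputs: $Y_{1,i}=X_i$ if Bob receives packet $i$, else $\perp$; $Y_{2,i}=X_i$ if Calvin receives packet $i$, else $\perp$. $V^i=(V_1,\dots,V_i)$ ($V^0$ empty). *)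

theory Defs
  imports "HOL-Probability.Probability"
begin

definition dentropy :: "'o pmf \<Rightarrow> ('o \<Rightarrow> 'x) \<Rightarrow> real" where
  "dentropy M X = - (\<Sum>x\<in>set_pmf (map_pmf X M).
       pmf (map_pmf X M) x * log 2 (pmf (map_pmf X M) x))"

definition cond_dentropy :: "'o pmf \<Rightarrow> ('o \<Rightarrow> 'x) \<Rightarrow> ('o \<Rightarrow> 'z) \<Rightarrow> real" where
  "cond_dentropy M X Z = - (\<Sum>xz\<in>set_pmf (map_pmf (\<lambda>w. (X w, Z w)) M).
       pmf (map_pmf (\<lambda>w. (X w, Z w)) M) xz *
       log 2 (pmf (map_pmf (\<lambda>w. (X w, Z w)) M) xz / pmf (map_pmf Z M) (snd xz)))"

definition cond_dmi :: "'o pmf \<Rightarrow> ('o \<Rightarrow> 'x) \<Rightarrow> ('o \<Rightarrow> 'y) \<Rightarrow> ('o \<Rightarrow> 'z) \<Rightarrow> real" where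
  "cond_dmi M X Y Z = cond_dentropy M X Z - cond_dentropy M X (\<lambda>w. (Y w, Z w))"

text \<open>Channel states: only Bob receives, only Calvin receives, both, neither.\<close>
datatype chstate = StB | StC | StBC | StNone

fun bob_rec :: "chstate \<Rightarrow> bool" where
  "bob_rec StB = True" | "bob_rec StBC = True" | "bob_rec StC = False" | "bob_rec StNone = False"

fun calvin_rec :: "chstate \<Rightarrow> bool" where
  "calvin_rec StC = True" | "calvin_rec StBC = True" | "calvin_rec StB = False" | "calvin_rec StNone = False"

definition mk_state :: "bool \<Rightarrow> bool \<Rightarrow> chstate" where
  "mk_state b c = (if b then (if c then StBC else StB) else (if c then StC else StNone))"

definition state_pmf :: "real \<Rightarrow> real \<Rightarrow> chstate pmf" where
  "state_pmf d1 d2 = map_pmf (\<lambda>(b, c). mk_state b c)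
      (pair_pmf (bernoulli_pmf (1 - d1)) (bernoulli_pmf (1 - d2)))"

text \<open>Vectors in F_q^m are lists of length m over the finite field 'a.\<close>
definition converse_space ::
  "nat \<Rightarrow> nat \<Rightarrow> nat \<Rightarrow> 'r pmf \<Rightarrow> nat \<Rightarrow> real \<Rightarrow> real
     \<Rightarrow> ('a::{finite,field} list \<times> 'a list \<times> 'r \<times> chstate list) pmf" where
  "converse_space L N1 N2 th n d1 d2 = do {
      w1 \<leftarrow> pmf_of_set {w :: 'a list. length w = L * N1};
      w2 \<leftarrow> pmf_of_set {w :: 'a list. length w = L * N2};
      t \<leftarrow> th;
      s \<leftarrow> replicate_pmf n (state_pmf d1 d2);
      return_pmf (w1, w2, t, s) }"

text \<open>Random variables on the outcome (w1, w2, t, s); indices are 1-based, S_j = s ! (j-1).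
  Encoder: X_i = f i W1 W2 Theta_A S^{i-1}.\<close>
definition Xv :: "(nat \<Rightarrow> 'a list \<Rightarrow> 'a list \<Rightarrow> 'r \<Rightarrow> chstate list \<Rightarrow> 'a list) \<Rightarrow> nat
     \<Rightarrow> 'a list \<times> 'a list \<times> 'r \<times> chstate list \<Rightarrow> 'a list" where
  "Xv f i \<omega> = (case \<omega> of (w1, w2, t, s) \<Rightarrow> f i w1 w2 t (take (i - 1) s))"

text \<open>Y_1^k = (Y_{1,1},...,Y_{1,k}); None plays the role of the erasure symbol.\<close>
definition Y1hist :: "(nat \<Rightarrow> 'a list \<Rightarrow> 'a list \<Rightarrow> 'r \<Rightarrow> chstate list \<Rightarrow> 'a list) \<Rightarrow> nat
     \<Rightarrow> 'a list \<times> 'a list \<times> 'r \<times> chstate list \<Rightarrow> 'a list option list" where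
  "Y1hist f k \<omega> = map (\<lambda>j. if bob_rec (snd (snd (snd \<omega>)) ! (j - 1)) then Some (Xv f j \<omega>) else None)
      [1..<Suc k]"

definition Y2hist :: "(nat \<Rightarrow> 'a list \<Rightarrow> 'a list \<Rightarrow> 'r \<Rightarrow> chstate list \<Rightarrow> 'a list) \<Rightarrow> nat
     \<Rightarrow> 'a list \<times> 'a list \<times> 'r \<times> chstate list \<Rightarrow> 'a list option list" where
  "Y2hist f k \<omega> = map (\<lambda>j. if calvin_rec (snd (snd (snd \<omega>)) ! (j - 1)) then Some (Xv f j \<omega>) else None)
      [1..<Suc k]"

definition Shist :: "nat \<Rightarrow> 'a list \<times> 'a list \<times> 'r \<times> chstate list \<Rightarrow> chstate list" where
  "Shist k \<omega> = take k (snd (snd (snd \<omega>)))"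

definition W1v :: "'a list \<times> 'a list \<times> 'r \<times> chstate list \<Rightarrow> 'a list" where
  "W1v \<omega> = fst \<omega>"

end

theory Submission
  imports Defs
begin


definition ent :: "'a pmf \<Rightarrow> real" where
  "ent p = - (\<Sum>x\<in>set_pmf p. pmf p x * log 2 (pmf p x))"

lemma dentropy_ent: "dentropy M X = ent (map_pmf X M)"
  by (simp add: dentropy_def ent_def)

lemma ent_superset:
  assumes "finite A" "set_pmf p \<subseteq> A"
  shows "ent p = - (\<Sum>x\<in>A. pmf p x * log 2 (pmf p x))"
  unfolding ent_def
  by (rule arg_cong[where f=uminus], rule sum.mono_neutral_left) (use assms in \<open>auto simp: set_pmf_iff\<close>)

lemma sum_map_pmf:
  assumes "finite (set_pmf p)"
  shows "(\<Sum>x\<in>set_pmf p. pmf p x * h (g x)) = (\<Sum>y\<in>set_pmf (map_pmf g p). pmf (map_pmf g p) y * h y)"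
proof -
  let ?S = "set_pmf p"
  have "(\<Sum>x\<in>?S. pmf p x * h (g x)) = (\<Sum>y\<in>g ` ?S. \<Sum>x\<in>{x\<in>?S. g x = y}. pmf p x * h (g x))"
    by (rule sum.image_gen[OF assms])
  also have "\<dots> = (\<Sum>y\<in>g ` ?S. pmf (map_pmf g p) y * h y)"
  proof (rule sum.cong[OF refl])
    fix y assume "y \<in> g ` ?S"
    have "(\<Sum>x\<in>{x\<in>?S. g x = y}. pmf p x * h (g x)) = (\<Sum>x\<in>{x\<in>?S. g x = y}. pmf p x) * h y"
      by (simp add: sum_distrib_right)
    also have "(\<Sum>x\<in>{x\<in>?S. g x = y}. pmf p x) = measure p (g -` {y} \<inter> ?S)"
      by (subst measure_measure_pmf_finite) (auto intro: finite_subset[OF _ assms] intro!: sum.cong)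
    also have "\<dots> = pmf (map_pmf g p) y"
      by (simp add: measure_Int_set_pmf pmf_map)
    finally show "(\<Sum>x\<in>{x\<in>?S. g x = y}. pmf p x * h (g x)) = pmf (map_pmf g p) y * h y" .
  qed
  finally show ?thesis by simp
qed

lemma ent_inj:
  assumes "inj_on g (set_pmf p)"
  shows "ent (map_pmf g p) = ent p"
  unfolding ent_def using assms
  by (simp add: sum.reindex pmf_map_inj)

lemma ent_map_le:
  assumes "finite (set_pmf p)"
  shows "ent (map_pmf g p) \<le> ent p"
proof -
  have "ent (map_pmf g p) = - (\<Sum>x\<in>set_pmf p. pmf p x * log 2 (pmf (map_pmf g p) (g x)))"
    unfolding ent_def using sum_map_pmf[OF assms, of "\<lambda>y. log 2 (pmf (map_pmf g p) y)" g] by simp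
  also have "\<dots> \<le> ent p"
    unfolding ent_def
  proof (rule le_imp_neg_le, rule sum_mono)
    fix x assume x: "x \<in> set_pmf p"
    have px: "0 < pmf p x" using x by (simp add: pmf_positive)
    have "pmf p x = measure p {x}" by (simp add: measure_pmf_single)
    also have "\<dots> \<le> measure p (g -` {g x})"
      by (rule measure_pmf.finite_measure_mono) auto
    also have "\<dots> = pmf (map_pmf g p) (g x)" by (simp add: pmf_map)
    finally have le: "pmf p x \<le> pmf (map_pmf g p) (g x)" .
    then have "log 2 (pmf p x) \<le> log 2 (pmf (map_pmf g p) (g x))"
      using px by simp
    then show "pmf p x * log 2 (pmf p x) \<le> pmf p x * log 2 (pmf (map_pmf g p) (g x))"
      using px by (simp add: mult_left_mono)
  qed
  finally show ?thesis .
qed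

lemma cond_ent:
  assumes "finite (set_pmf (map_pmf (\<lambda>w. (X w, Z w)) M))"
  shows "cond_dentropy M X Z = dentropy M (\<lambda>w. (X w, Z w)) - dentropy M Z"
proof -
  let ?J = "map_pmf (\<lambda>w. (X w, Z w)) M"
  have mz: "map_pmf snd ?J = map_pmf Z M" by (simp add: map_pmf_comp)
  have "cond_dentropy M X Z = - (\<Sum>xz\<in>set_pmf ?J. pmf ?J xz * log 2 (pmf ?J xz)
          - pmf ?J xz * log 2 (pmf (map_pmf Z M) (snd xz)))"
    unfolding cond_dentropy_def
  proof (rule arg_cong[where f=uminus], rule sum.cong[OF refl])
    fix xz assume xz: "xz \<in> set_pmf ?J"
    have "snd xz \<in> set_pmf (map_pmf snd ?J)" using xz by auto
    then have "0 < pmf (map_pmf Z M) (snd xz)" using mz by (simp add: pmf_positive)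
    moreover have "0 < pmf ?J xz" using xz by (simp add: pmf_positive)
    ultimately show "pmf ?J xz * log 2 (pmf ?J xz / pmf (map_pmf Z M) (snd xz)) =
         pmf ?J xz * log 2 (pmf ?J xz) - pmf ?J xz * log 2 (pmf (map_pmf Z M) (snd xz))"
      by (simp add: log_divide right_diff_distrib)
  qed
  also have "\<dots> = ent ?J + (\<Sum>xz\<in>set_pmf ?J. pmf ?J xz * log 2 (pmf (map_pmf Z M) (snd xz)))"
    unfolding ent_def by (simp add: sum_subtractf)
  also have "(\<Sum>xz\<in>set_pmf ?J. pmf ?J xz * log 2 (pmf (map_pmf Z M) (snd xz))) = - ent (map_pmf Z M)"
    using sum_map_pmf[OF assms, of "\<lambda>z. log 2 (pmf (map_pmf Z M) z)" snd] mz
    unfolding ent_def by simp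
  finally show ?thesis by (simp add: dentropy_ent)
qed



lemma sum_prod_log:
  assumes "finite A" "finite B" "\<And>a. a \<in> A \<Longrightarrow> 0 < u a" "\<And>b. b \<in> B \<Longrightarrow> 0 < v b"
  shows "(\<Sum>ab\<in>A \<times> B. u (fst ab) * v (snd ab) * log 2 (u (fst ab) * v (snd ab))) =
    (\<Sum>a\<in>A. u a * log 2 (u a)) * (\<Sum>b\<in>B. v b) + (\<Sum>a\<in>A. u a) * (\<Sum>b\<in>B. v b * log 2 (v b))"
proof -
  have "(\<Sum>ab\<in>A \<times> B. u (fst ab) * v (snd ab) * log 2 (u (fst ab) * v (snd ab))) =
        (\<Sum>a\<in>A. \<Sum>b\<in>B. (u a * log 2 (u a)) * v b + u a * (v b * log 2 (v b)))"
    unfolding sum.cartesian_product'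
    by (rule sum.cong[OF refl], rule sum.cong[OF refl])
       (use assms in \<open>simp add: log_mult algebra_simps\<close>)
  also have "\<dots> = (\<Sum>a\<in>A. (u a * log 2 (u a)) * (\<Sum>b\<in>B. v b) + u a * (\<Sum>b\<in>B. v b * log 2 (v b)))"
    by (simp add: sum.distrib sum_distrib_left)
  also have "\<dots> = (\<Sum>a\<in>A. u a * log 2 (u a)) * (\<Sum>b\<in>B. v b) + (\<Sum>a\<in>A. u a) * (\<Sum>b\<in>B. v b * log 2 (v b))"
    by (simp add: sum.distrib sum_distrib_right)
  finally show ?thesis .
qed

lemma core:
  fixes \<rho> :: "('x \<times> 'p) pmf" and \<nu> :: "'s pmf"
  assumes fr: "finite (set_pmf \<rho>)" and fn: "finite (set_pmf \<nu>)"
  shows "ent (map_pmf (\<lambda>((x,p),s). (p, s, if R s then Some x else None)) (pair_pmf \<rho> \<nu>))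
     = ent (map_pmf snd \<rho>) + ent \<nu> + measure \<nu> {s. R s} * (ent \<rho> - ent (map_pmf snd \<rho>))"
proof -
  define h where "h = (\<lambda>((x::'x,p::'p),s::'s). (p, s, if R s then Some x else None))"
  define T where "T = map_pmf h (pair_pmf \<rho> \<nu>)"
  define P where "P = map_pmf snd \<rho>"
  define SR where "SR = {s\<in>set_pmf \<nu>. R s}"
  define SN where "SN = {s\<in>set_pmf \<nu>. \<not> R s}"
  define g1 where "g1 = (\<lambda>(xp::'x\<times>'p, s::'s). (snd xp, s, Some (fst xp)))"
  define g2 where "g2 = (\<lambda>(p::'p, s::'s). (p, s, (None::'x option)))"
  define A1 where "A1 = g1 ` (set_pmf \<rho> \<times> SR)"
  define A2 where "A2 = g2 ` (set_pmf P \<times> SN)"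
  have fP: "finite (set_pmf P)" unfolding P_def using fr by simp
  have fSR: "finite SR" "finite SN" unfolding SR_def SN_def using fn by auto
  have fA: "finite A1" "finite A2" unfolding A1_def A2_def using fr fP fSR by auto
  have sub: "set_pmf T \<subseteq> A1 \<union> A2"
  proof
    fix z assume "z \<in> set_pmf T"
    then obtain x p s where xps: "((x,p),s) \<in> set_pmf \<rho> \<times> set_pmf \<nu>" and z: "z = h ((x,p),s)"
      unfolding T_def by auto
    show "z \<in> A1 \<union> A2"
    proof (cases "R s")
      case True
      then have "z = g1 ((x,p),s)" unfolding z h_def g1_def by simp
      moreover have "((x,p),s) \<in> set_pmf \<rho> \<times> SR" using xps True unfolding SR_def by auto
      ultimately show ?thesis unfolding A1_def by blast
    next
      case False
      then have "z = g2 (p,s)" unfolding z h_def g2_def by simp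
      moreover have "(p,s) \<in> set_pmf P \<times> SN" using xps False unfolding SN_def P_def
        by (auto intro: rev_image_eqI)
      ultimately show ?thesis unfolding A2_def by blast
    qed
  qed
  have disj: "A1 \<inter> A2 = {}" unfolding A1_def A2_def g1_def g2_def by auto
  have inj1: "inj_on g1 (set_pmf \<rho> \<times> SR)" unfolding g1_def by (auto simp: inj_on_def)
  have inj2: "inj_on g2 (set_pmf P \<times> SN)" unfolding g2_def by (auto simp: inj_on_def)
  have pT1: "pmf T (g1 (xp, s)) = pmf \<rho> xp * pmf \<nu> s" if "R s" for xp s
  proof -
    have "h -` {g1 (xp, s)} = {(xp, s)}"
      using that unfolding h_def g1_def by (auto split: if_splits)
    then show ?thesis unfolding T_def pmf_map by (simp add: measure_pmf_single pmf_pair)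
  qed
  have pT2: "pmf T (g2 (p, s)) = pmf P p * pmf \<nu> s" if "\<not> R s" for p s
  proof -
    have "h -` {g2 (p, s)} = (snd -` {p}) \<times> {s}"
      using that unfolding h_def g2_def by (auto split: if_splits)
    have "measure (pair_pmf \<rho> \<nu>) ((snd -` {p}) \<times> {s})
        = measure (pair_pmf \<rho> \<nu>) (((snd -` {p}) \<times> {s}) \<inter> set_pmf (pair_pmf \<rho> \<nu>))"
      by (rule measure_Int_set_pmf[symmetric])
    also have "((snd -` {p}) \<times> {s}) \<inter> set_pmf (pair_pmf \<rho> \<nu>) = ((snd -` {p}) \<inter> set_pmf \<rho>) \<times> ({s} \<inter> set_pmf \<nu>)"
      by auto
    also have "measure (pair_pmf \<rho> \<nu>) \<dots> = measure \<rho> ((snd -` {p}) \<inter> set_pmf \<rho>) * measure \<nu> ({s} \<inter> set_pmf \<nu>)"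
      by (rule measure_pmf_prob_product) (use fr fn in \<open>auto intro: countable_finite\<close>)
    also have "\<dots> = measure \<rho> (snd -` {p}) * measure \<nu> {s}"
      by (simp add: measure_Int_set_pmf)
    finally show ?thesis using \<open>h -` {g2 (p, s)} = (snd -` {p}) \<times> {s}\<close> unfolding T_def P_def pmf_map
      by (simp add: measure_pmf_single)
  qed
  have "ent T = - ((\<Sum>z\<in>A1. pmf T z * log 2 (pmf T z)) + (\<Sum>z\<in>A2. pmf T z * log 2 (pmf T z)))"
    using ent_superset[of "A1 \<union> A2" T] sub fA disj by (simp add: sum.union_disjoint)
  also have "(\<Sum>z\<in>A1. pmf T z * log 2 (pmf T z)) =
      (\<Sum>ab\<in>set_pmf \<rho> \<times> SR. pmf \<rho> (fst ab) * pmf \<nu> (snd ab) * log 2 (pmf \<rho> (fst ab) * pmf \<nu> (snd ab)))"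
    unfolding A1_def using inj1
    by (simp add: sum.reindex, intro sum.cong refl) (auto simp: pT1 SR_def)
  also have "\<dots> = (\<Sum>a\<in>set_pmf \<rho>. pmf \<rho> a * log 2 (pmf \<rho> a)) * (\<Sum>b\<in>SR. pmf \<nu> b) + (\<Sum>a\<in>set_pmf \<rho>. pmf \<rho> a) * (\<Sum>b\<in>SR. pmf \<nu> b * log 2 (pmf \<nu> b))"
    by (rule sum_prod_log) (use fr fSR in \<open>auto simp: SR_def pmf_positive\<close>)
  also have "(\<Sum>z\<in>A2. pmf T z * log 2 (pmf T z)) =
      (\<Sum>ab\<in>set_pmf P \<times> SN. pmf P (fst ab) * pmf \<nu> (snd ab) * log 2 (pmf P (fst ab) * pmf \<nu> (snd ab)))"
    unfolding A2_def using inj2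
    by (simp add: sum.reindex, intro sum.cong refl) (auto simp: pT2 SN_def)
  also have "\<dots> = (\<Sum>a\<in>set_pmf P. pmf P a * log 2 (pmf P a)) * (\<Sum>b\<in>SN. pmf \<nu> b) + (\<Sum>a\<in>set_pmf P. pmf P a) * (\<Sum>b\<in>SN. pmf \<nu> b * log 2 (pmf \<nu> b))"
    by (rule sum_prod_log) (use fP fSR in \<open>auto simp: SN_def pmf_positive\<close>)
  finally have eT: "ent T = - ((\<Sum>a\<in>set_pmf \<rho>. pmf \<rho> a * log 2 (pmf \<rho> a)) * (\<Sum>b\<in>SR. pmf \<nu> b) + (\<Sum>a\<in>set_pmf \<rho>. pmf \<rho> a) * (\<Sum>b\<in>SR. pmf \<nu> b * log 2 (pmf \<nu> b))
     + ((\<Sum>a\<in>set_pmf P. pmf P a * log 2 (pmf P a)) * (\<Sum>b\<in>SN. pmf \<nu> b) + (\<Sum>a\<in>set_pmf P. pmf P a) * (\<Sum>b\<in>SN. pmf \<nu> b * log 2 (pmf \<nu> b))))" .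
  have s1: "(\<Sum>a\<in>set_pmf \<rho>. pmf \<rho> a) = 1" by (rule sum_pmf_eq_1) (use fr in auto)
  have s2: "(\<Sum>a\<in>set_pmf P. pmf P a) = 1" by (rule sum_pmf_eq_1) (use fP in auto)
  have mR: "(\<Sum>b\<in>SR. pmf \<nu> b) = measure \<nu> {s. R s}"
    using measure_Int_set_pmf[of \<nu> "{s. R s}"] measure_measure_pmf_finite[OF fSR(1), of \<nu>]
    unfolding SR_def by (simp add: Int_def conj_commute)
  have mN: "(\<Sum>b\<in>SN. pmf \<nu> b) = 1 - measure \<nu> {s. R s}"
  proof -
    have "(\<Sum>b\<in>SN. pmf \<nu> b) + (\<Sum>b\<in>SR. pmf \<nu> b) = (\<Sum>b\<in>set_pmf \<nu>. pmf \<nu> b)"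
      by (subst sum.union_disjoint[symmetric]) (use fSR in \<open>auto simp: SR_def SN_def intro!: sum.cong\<close>)
    also have "\<dots> = 1" by (rule sum_pmf_eq_1) (use fn in auto)
    finally show ?thesis using mR by simp
  qed
  have lS: "(\<Sum>b\<in>SR. pmf \<nu> b * log 2 (pmf \<nu> b)) + (\<Sum>b\<in>SN. pmf \<nu> b * log 2 (pmf \<nu> b)) = - ent \<nu>"
    unfolding ent_def
    by (subst sum.union_disjoint[symmetric]) (use fSR in \<open>auto simp: SR_def SN_def intro!: sum.cong\<close>)
  have "ent T = measure \<nu> {s. R s} * ent \<rho> + (1 - measure \<nu> {s. R s}) * ent P + ent \<nu>"
    using eT s1 s2 mR mN lS unfolding ent_def[of \<rho>] ent_def[of P] by (simp add: algebra_simps)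
  then show ?thesis unfolding T_def h_def P_def by (simp add: algebra_simps)
qed



lemma step:
  fixes X :: "'o \<Rightarrow> 'x" and P :: "'o \<Rightarrow> 'p" and K :: "'o \<Rightarrow> 's"
  assumes indep: "map_pmf (\<lambda>\<omega>. ((X \<omega>, P \<omega>), K \<omega>)) M = pair_pmf (map_pmf (\<lambda>\<omega>. (X \<omega>, P \<omega>)) M) \<nu>"
    and fr: "finite (set_pmf (map_pmf (\<lambda>\<omega>. (X \<omega>, P \<omega>)) M))" and fn: "finite (set_pmf \<nu>)"
    and Q: "\<And>\<omega>. \<omega> \<in> set_pmf M \<Longrightarrow> Q \<omega> = g (P \<omega>, K \<omega>, if R (K \<omega>) then Some (X \<omega>) else None)"
    and inj: "inj_on g {(p,s,y). R s \<or> y = None}"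
  shows "ent (map_pmf Q M) = ent (map_pmf P M) + ent \<nu> + measure \<nu> {s. R s} *
           (ent (map_pmf (\<lambda>\<omega>. (X \<omega>, P \<omega>)) M) - ent (map_pmf P M))"
proof -
  define h where "h = (\<lambda>((x::'x,p::'p),s::'s). (p, s, if R s then Some x else None))"
  define T where "T = map_pmf h (pair_pmf (map_pmf (\<lambda>\<omega>. (X \<omega>, P \<omega>)) M) \<nu>)"
  have "map_pmf Q M = map_pmf (g \<circ> h \<circ> (\<lambda>\<omega>. ((X \<omega>, P \<omega>), K \<omega>))) M"
    by (rule map_pmf_cong[OF refl]) (simp add: Q h_def)
  also have "\<dots> = map_pmf g T" unfolding T_def indep[symmetric] by (simp add: map_pmf_comp o_def)
  finally have eQ: "map_pmf Q M = map_pmf g T" .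
  have "set_pmf T \<subseteq> {(p,s,y). R s \<or> y = None}" unfolding T_def h_def by (auto split: if_splits)
  then have "ent (map_pmf g T) = ent T" by (intro ent_inj inj_on_subset[OF inj])
  also have "ent T = ent (map_pmf snd (map_pmf (\<lambda>\<omega>. (X \<omega>, P \<omega>)) M)) + ent \<nu> + measure \<nu> {s. R s} *
           (ent (map_pmf (\<lambda>\<omega>. (X \<omega>, P \<omega>)) M) - ent (map_pmf snd (map_pmf (\<lambda>\<omega>. (X \<omega>, P \<omega>)) M)))"
    unfolding T_def h_def by (rule core[OF fr fn])
  finally show ?thesis using eQ by (simp add: map_pmf_comp)
qed

lemma rep_split_map:
  assumes "m < n"
  shows "map_pmf (\<lambda>s. (take m s, s ! m)) (replicate_pmf n \<nu>) = pair_pmf (replicate_pmf m \<nu>) \<nu>"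
proof -
  define r where "r = n - Suc m"
  have n: "n = m + Suc r" using assms unfolding r_def by simp
  have R: "replicate_pmf n \<nu> = bind_pmf (replicate_pmf m \<nu>) (\<lambda>xs. bind_pmf \<nu> (\<lambda>x.
      bind_pmf (replicate_pmf r \<nu>) (\<lambda>ys. return_pmf (xs @ x # ys))))"
    unfolding n replicate_pmf_distrib replicate_pmf.simps(2)
    by (simp only: bind_assoc_pmf bind_return_pmf)
  have "map_pmf (\<lambda>s. (take m s, s ! m)) (replicate_pmf n \<nu>) =
     bind_pmf (replicate_pmf m \<nu>) (\<lambda>xs. bind_pmf \<nu> (\<lambda>x. bind_pmf (replicate_pmf r \<nu>) (\<lambda>ys. return_pmf (take m (xs @ x # ys), (xs @ x # ys) ! m))))"
    unfolding R by (simp only: map_bind_pmf map_return_pmf)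
  also have "\<dots> = bind_pmf (replicate_pmf m \<nu>) (\<lambda>xs. bind_pmf \<nu> (\<lambda>x. return_pmf (xs, x)))"
  proof (rule bind_pmf_cong[OF refl])
    fix xs assume "xs \<in> set_pmf (replicate_pmf m \<nu>)"
    then have l: "length xs = m" by (simp add: set_replicate_pmf)
    have "\<And>x ys. (take m (xs @ x # ys), (xs @ x # ys) ! m) = (xs, x)" using l by (simp add: nth_append)
    then show "bind_pmf \<nu> (\<lambda>x. bind_pmf (replicate_pmf r \<nu>) (\<lambda>ys. return_pmf (take m (xs @ x # ys), (xs @ x # ys) ! m)))
      = bind_pmf \<nu> (\<lambda>x. return_pmf (xs, x))"
      by (simp only: bind_pmf_const)
  qed
  also have "\<dots> = pair_pmf (replicate_pmf m \<nu>) \<nu>" by (simp only: pair_pmf_def)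
  finally show ?thesis .
qed

lemma rep_split:
  assumes "m < n"
  shows "bind_pmf (replicate_pmf n \<nu>) (\<lambda>s. G (take m s) (s ! m)) =
    bind_pmf (replicate_pmf m \<nu>) (\<lambda>a. bind_pmf \<nu> (\<lambda>x. G a x))"
proof -
  have "bind_pmf (replicate_pmf n \<nu>) (\<lambda>s. G (take m s) (s ! m)) =
     bind_pmf (map_pmf (\<lambda>s. (take m s, s ! m)) (replicate_pmf n \<nu>)) (\<lambda>(a,x). G a x)"
    by (simp add: bind_map_pmf)
  also have "\<dots> = bind_pmf (replicate_pmf m \<nu>) (\<lambda>a. bind_pmf \<nu> (\<lambda>x. G a x))"
    unfolding rep_split_map[OF assms] pair_pmf_def by (simp add: bind_assoc_pmf bind_return_pmf)
  finally show ?thesis .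
qed

lemma rep_split':
  assumes "m < n"
  shows "bind_pmf (replicate_pmf n \<nu>) (\<lambda>s. G (take m s)) = bind_pmf (replicate_pmf m \<nu>) G"
  using rep_split[OF assms, of \<nu> "\<lambda>a x. G a"] by (simp add: bind_pmf_const)

definition trunc :: "nat \<Rightarrow> 'a list \<times> 'a list \<times> 'r \<times> chstate list \<Rightarrow> 'a list \<times> 'a list \<times> 'r \<times> chstate list" where
  "trunc m \<omega> = (case \<omega> of (w1, w2, t, s) \<Rightarrow> (w1, w2, t, take m s))"

lemma rep_splitA:
  assumes "m < n"
  shows "bind_pmf (replicate_pmf n \<nu>) (\<lambda>s. return_pmf ((w1,w2,t,take m s), s ! m)) =
    bind_pmf (replicate_pmf m \<nu>) (\<lambda>a. bind_pmf \<nu> (\<lambda>x. return_pmf ((w1,w2,t,a), x)))"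
  by (rule rep_split[OF assms, of \<nu> "\<lambda>a x. return_pmf ((w1,w2,t,a), x)"])

lemma rep_splitB:
  assumes "m < n"
  shows "bind_pmf (replicate_pmf n \<nu>) (\<lambda>s. bind_pmf \<nu> (\<lambda>x. return_pmf ((w1,w2,t,take m s), x))) =
    bind_pmf (replicate_pmf m \<nu>) (\<lambda>a. bind_pmf \<nu> (\<lambda>x. return_pmf ((w1,w2,t,a), x)))"
  by (rule rep_split'[OF assms, of \<nu> "\<lambda>a. bind_pmf \<nu> (\<lambda>x. return_pmf ((w1,w2,t,a), x))"])

lemma decomp:
  assumes "m < n"
  shows "map_pmf (\<lambda>\<omega>. (trunc m \<omega>, snd (snd (snd \<omega>)) ! m)) (converse_space L N1 N2 th n d1 d2)
    = pair_pmf (map_pmf (trunc m) (converse_space L N1 N2 th n d1 d2)) (state_pmf d1 d2)"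
proof -
  have L: "map_pmf (\<lambda>\<omega>. (trunc m \<omega>, snd (snd (snd \<omega>)) ! m)) (converse_space L N1 N2 th n d1 d2) =
     bind_pmf (pmf_of_set {w. length w = L * N1}) (\<lambda>w1. bind_pmf (pmf_of_set {w. length w = L * N2}) (\<lambda>w2.
       bind_pmf th (\<lambda>t. bind_pmf (replicate_pmf n (state_pmf d1 d2)) (\<lambda>s. return_pmf ((w1,w2,t,take m s), s ! m)))))"
    unfolding converse_space_def trunc_def by (simp only: map_bind_pmf map_return_pmf) simp
  have R: "pair_pmf (map_pmf (trunc m) (converse_space L N1 N2 th n d1 d2)) (state_pmf d1 d2) =
     bind_pmf (pmf_of_set {w. length w = L * N1}) (\<lambda>w1. bind_pmf (pmf_of_set {w. length w = L * N2}) (\<lambda>w2.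
       bind_pmf th (\<lambda>t. bind_pmf (replicate_pmf n (state_pmf d1 d2)) (\<lambda>s. bind_pmf (state_pmf d1 d2) (\<lambda>x. return_pmf ((w1,w2,t,take m s), x))))))"
    unfolding converse_space_def trunc_def pair_pmf_def
    by (simp only: map_bind_pmf map_return_pmf bind_assoc_pmf bind_return_pmf) simp
  show ?thesis unfolding L R by (simp only: rep_splitA[OF assms] rep_splitB[OF assms])
qed



lemma UNIV_chstate: "(UNIV :: chstate set) = {StB, StC, StBC, StNone}"
  using chstate.exhaust by auto

lemma finite_chstate: "finite (UNIV :: chstate set)"
  by (simp add: UNIV_chstate)

lemma meas_state:
  assumes "0 \<le> d1" "d1 \<le> 1" "0 \<le> d2" "d2 \<le> 1"
  shows "measure (state_pmf d1 d2) {s. bob_rec s \<or> calvin_rec s} = 1 - d1 * d2"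
    and "measure (state_pmf d1 d2) {s. calvin_rec s} = 1 - d2"
proof -
  have e1: "(\<lambda>(b, c). mk_state b c) -` {s. bob_rec s \<or> calvin_rec s} = {(True,True),(True,False),(False,True)}"
    by (auto simp: mk_state_def split: if_splits)
  have e2: "(\<lambda>(b, c). mk_state b c) -` {s. calvin_rec s} = {(True,True),(False,True)}"
    by (auto simp: mk_state_def split: if_splits)
  show "measure (state_pmf d1 d2) {s. bob_rec s \<or> calvin_rec s} = 1 - d1 * d2"
    unfolding state_pmf_def measure_map_pmf e1
    by (subst measure_measure_pmf_finite) (use assms in \<open>simp_all add: pmf_pair algebra_simps\<close>)
  show "measure (state_pmf d1 d2) {s. calvin_rec s} = 1 - d2"
    unfolding state_pmf_def measure_map_pmf e2
    by (subst measure_measure_pmf_finite) (use assms in \<open>simp_all add: pmf_pair algebra_simps\<close>)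
qed

lemma fin_map: "finite (V ` set_pmf M) \<Longrightarrow> finite (set_pmf (map_pmf V M))"
  by simp

lemma fin_pair: "finite (A ` S) \<Longrightarrow> finite (B ` S) \<Longrightarrow> finite ((\<lambda>\<omega>. (A \<omega>, B \<omega>)) ` S)"
  by (rule finite_subset[of _ "A ` S \<times> B ` S"]) auto

lemma indep_gen:
  assumes dec: "map_pmf (\<lambda>\<omega>. (B \<omega>, K \<omega>)) M = pair_pmf (map_pmf B M) \<nu>"
    and V: "\<And>\<omega>. V (B \<omega>) = V \<omega>"
  shows "map_pmf (\<lambda>\<omega>. (V \<omega>, K \<omega>)) M = pair_pmf (map_pmf V M) \<nu>"
proof -
  have "map_pmf (\<lambda>\<omega>. (V \<omega>, K \<omega>)) M = map_pmf (\<lambda>(b, k). (V b, id k)) (map_pmf (\<lambda>\<omega>. (B \<omega>, K \<omega>)) M)"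
    by (simp add: map_pmf_comp V)
  also have "\<dots> = pair_pmf (map_pmf V M) \<nu>"
    unfolding dec map_pair by (simp add: map_pmf_comp V)
  finally show ?thesis .
qed

lemma supp_M:
  assumes "\<omega> \<in> set_pmf (converse_space L N1 N2 th n d1 d2 :: ('a::{finite,field} list \<times> 'a list \<times> 'r \<times> chstate list) pmf)"
  shows "length (fst \<omega>) = L * N1" "length (snd (snd (snd \<omega>))) = n"
proof -
  have ne: "{w :: 'a list. length w = k} \<noteq> {}" for k
    by (metis (mono_tags) empty_iff length_replicate mem_Collect_eq)
  have fi: "finite {w :: 'a list. length w = k}" for k
    using finite_lists_length_eq[of "UNIV :: 'a set" k] by simp
  show "length (fst \<omega>) = L * N1" "length (snd (snd (snd \<omega>))) = n"
    using assms unfolding converse_space_def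
    by (auto simp: set_pmf_of_set[OF ne fi] set_replicate_pmf)
qed



lemma len_Xv: "(\<And>i w1 w2 t ss. length (f i w1 w2 t ss) = L) \<Longrightarrow> length (Xv f i \<omega>) = L"
  by (cases \<omega>) (simp add: Xv_def)

lemma Y1_Suc: "Y1hist f (Suc m) \<omega> = Y1hist f m \<omega> @ [if bob_rec (snd (snd (snd \<omega>)) ! m) then Some (Xv f (Suc m) \<omega>) else None]"
  by (simp add: Y1hist_def)

lemma Y2_Suc: "Y2hist f (Suc m) \<omega> = Y2hist f m \<omega> @ [if calvin_rec (snd (snd (snd \<omega>)) ! m) then Some (Xv f (Suc m) \<omega>) else None]"
  by (simp add: Y2hist_def)

lemma Sh_Suc: "m < length (snd (snd (snd \<omega>))) \<Longrightarrow> Shist (Suc m) \<omega> = Shist m \<omega> @ [snd (snd (snd \<omega>)) ! m]"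
  by (simp add: Shist_def take_Suc_conv_app_nth)

lemma tr_X: "Xv f (Suc m) (trunc m \<omega>) = Xv f (Suc m) \<omega>"
  by (cases \<omega>) (simp add: Xv_def trunc_def)

lemma tr_Y1: "Y1hist f m (trunc m \<omega>) = Y1hist f m \<omega>"
  by (cases \<omega>) (auto simp: Y1hist_def trunc_def Xv_def min_def intro!: map_cong)

lemma tr_Y2: "Y2hist f m (trunc m \<omega>) = Y2hist f m \<omega>"
  by (cases \<omega>) (auto simp: Y2hist_def trunc_def Xv_def min_def intro!: map_cong)

lemma tr_Sh: "Shist m (trunc m \<omega>) = Shist m \<omega>"
  by (cases \<omega>) (simp add: Shist_def trunc_def)

lemma tr_W: "W1v (trunc m \<omega>) = W1v \<omega>"
  by (cases \<omega>) (simp add: W1v_def trunc_def)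

lemma Y1_0: "Y1hist f 0 \<omega> = []" by (simp add: Y1hist_def)
lemma Y2_0: "Y2hist f 0 \<omega> = []" by (simp add: Y2hist_def)
lemma Sh_0: "Shist 0 \<omega> = []" by (simp add: Shist_def)



theorem lemma6:
  fixes L N1 N2 n :: nat
    and th :: "'r pmf"
    and d1 d2 :: real
    and f :: "nat \<Rightarrow> 'a::{finite,field} list \<Rightarrow> 'a list \<Rightarrow> 'r \<Rightarrow> chstate list \<Rightarrow> 'a list"
  assumes "0 < d1" "d1 < 1" "0 < d2" "d2 < 1"
    and "\<And>i w1 w2 t ss. length (f i w1 w2 t ss) = L"
  defines "M \<equiv> converse_space L N1 N2 th n d1 d2"
  shows "(\<Sum>i=1..n. cond_dentropy M (Xv f i)
            (\<lambda>\<omega>. (Y1hist f (i - 1) \<omega>, Y2hist f (i - 1) \<omega>, Shist (i - 1) \<omega>, W1v \<omega>)))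
     \<ge> (1 - d2) / ((1 - d1) * d2) *
        (\<Sum>i=1..n. cond_dmi M (Xv f i) (Y1hist f (i - 1))
            (\<lambda>\<omega>. (Y2hist f (i - 1) \<omega>, Shist (i - 1) \<omega>, W1v \<omega>)))"
proof -
  define \<nu> where "\<nu> = state_pmf d1 d2"
  define P1 where "P1 = (\<lambda>m \<omega>. (Y1hist f m \<omega>, Y2hist f m \<omega>, Shist m \<omega>, W1v \<omega>))"
  define P2 where "P2 = (\<lambda>m \<omega>. (Y2hist f m \<omega>, Shist m \<omega>, W1v \<omega>))"
  define K where "K = (\<lambda>m (\<omega>::'a list \<times> 'a list \<times> 'r \<times> chstate list). snd (snd (snd \<omega>)) ! m)"
  define A where "A = (\<lambda>i. cond_dentropy M (Xv f i)
            (\<lambda>\<omega>. (Y1hist f (i - 1) \<omega>, Y2hist f (i - 1) \<omega>, Shist (i - 1) \<omega>, W1v \<omega>)))"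
  define I where "I = (\<lambda>i. cond_dmi M (Xv f i) (Y1hist f (i - 1))
            (\<lambda>\<omega>. (Y2hist f (i - 1) \<omega>, Shist (i - 1) \<omega>, W1v \<omega>)))"
  define G where "G = (\<lambda>m. ent (map_pmf (P1 m) M) - ent (map_pmf (P2 m) M))"
  let ?S = "set_pmf M"
  have lenX: "length (Xv f i \<omega>) = L" for i \<omega> using len_Xv[of f L] assms(5) by blast
  have fXS: "finite {xs :: 'a list. length xs = L}"
    using finite_lists_length_eq[of "UNIV :: 'a set" L] by simp
  have finX: "finite (Xv f i ` ?S)" for i
    by (rule finite_subset[OF _ fXS]) (auto simp: lenX)
  have finY1: "finite (Y1hist f m ` ?S)" for m
    by (rule finite_subset[OF _ finite_lists_length_eq[of "insert None (Some ` {xs :: 'a list. length xs = L})" m]])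
       (use fXS in \<open>auto simp: Y1hist_def lenX\<close>)
  have finY2: "finite (Y2hist f m ` ?S)" for m
    by (rule finite_subset[OF _ finite_lists_length_eq[of "insert None (Some ` {xs :: 'a list. length xs = L})" m]])
       (use fXS in \<open>auto simp: Y2hist_def lenX\<close>)
  have finSh: "finite (Shist m ` ?S)" for m
    by (rule finite_subset[OF _ finite_lists_length_le[OF finite_chstate, of m]]) (auto simp: Shist_def)
  have lenW: "length (W1v \<omega>) = L * N1" if "\<omega> \<in> ?S" for \<omega>
    using supp_M(1)[of \<omega>] that unfolding M_def W1v_def by blast
  have finW: "finite (W1v ` ?S)"
    by (rule finite_subset[OF _ finite_lists_length_eq[of "UNIV :: 'a set" "L * N1"]])
       (auto simp: lenW)
  have finP1: "finite (set_pmf (map_pmf (P1 m) M))" for m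
    unfolding P1_def by (intro fin_map fin_pair finY1 finY2 finSh finW)
  have finP2: "finite (set_pmf (map_pmf (P2 m) M))" for m
    unfolding P2_def by (intro fin_map fin_pair finY2 finSh finW)
  have finXP1: "finite (set_pmf (map_pmf (\<lambda>\<omega>. (Xv f i \<omega>, P1 m \<omega>)) M))" for i m
    unfolding P1_def by (intro fin_map fin_pair finX finY1 finY2 finSh finW)
  have finXP2: "finite (set_pmf (map_pmf (\<lambda>\<omega>. (Xv f i \<omega>, P2 m \<omega>)) M))" for i m
    unfolding P2_def by (intro fin_map fin_pair finX finY2 finSh finW)
  have fin\<nu>: "finite (set_pmf \<nu>)" using finite_chstate by (rule finite_subset[rotated]) simp
  have A_eq: "A (Suc m) = ent (map_pmf (\<lambda>\<omega>. (Xv f (Suc m) \<omega>, P1 m \<omega>)) M) - ent (map_pmf (P1 m) M)" for m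
    unfolding A_def using cond_ent[OF finXP1[of "Suc m" m, unfolded P1_def]]
    by (simp add: dentropy_ent P1_def)
  have I_eq: "I (Suc m) = (ent (map_pmf (\<lambda>\<omega>. (Xv f (Suc m) \<omega>, P2 m \<omega>)) M) - ent (map_pmf (P2 m) M))
      - (ent (map_pmf (\<lambda>\<omega>. (Xv f (Suc m) \<omega>, P1 m \<omega>)) M) - ent (map_pmf (P1 m) M))" for m
    unfolding I_def cond_dmi_def using cond_ent[OF finXP1[of "Suc m" m, unfolded P1_def]]
       cond_ent[OF finXP2[of "Suc m" m, unfolded P2_def]]
    by (simp add: dentropy_ent P1_def P2_def)
  have dec: "map_pmf (\<lambda>\<omega>. (trunc m \<omega>, K m \<omega>)) M = pair_pmf (map_pmf (trunc m) M) \<nu>" if "m < n" for m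
    unfolding M_def K_def \<nu>_def by (rule decomp[OF that])
  have lenS: "m < length (snd (snd (snd \<omega>)))" if "\<omega> \<in> ?S" "m < n" for m \<omega>
    using supp_M(2)[of \<omega>] that unfolding M_def by simp
  have ms: "measure \<nu> {s. bob_rec s \<or> calvin_rec s} = 1 - d1 * d2" "measure \<nu> {s. calvin_rec s} = 1 - d2"
    unfolding \<nu>_def using meas_state[of d1 d2] assms(1-4) by simp_all
  have step1: "ent (map_pmf (P1 (Suc m)) M) = ent (map_pmf (P1 m) M) + ent \<nu> + (1 - d1 * d2) * A (Suc m)"
    if "m < n" for m
  proof -
    define g1 where "g1 = (\<lambda>((a::'a list option list, b::'a list option list, c::chstate list, d::'a list), s::chstate, y::'a list option).
       (a @ [if bob_rec s then y else None], b @ [if calvin_rec s then y else None], c @ [s], d))"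
    have ind: "map_pmf (\<lambda>\<omega>. ((Xv f (Suc m) \<omega>, P1 m \<omega>), K m \<omega>)) M = pair_pmf (map_pmf (\<lambda>\<omega>. (Xv f (Suc m) \<omega>, P1 m \<omega>)) M) \<nu>"
      by (rule indep_gen[OF dec[OF that], of "\<lambda>\<omega>. (Xv f (Suc m) \<omega>, P1 m \<omega>)"])
         (simp add: P1_def tr_X tr_Y1 tr_Y2 tr_Sh tr_W)
    have Q: "P1 (Suc m) \<omega> = g1 (P1 m \<omega>, K m \<omega>, if (bob_rec (K m \<omega>) \<or> calvin_rec (K m \<omega>)) then Some (Xv f (Suc m) \<omega>) else None)"
      if "\<omega> \<in> ?S" for \<omega>
      using lenS[OF that \<open>m < n\<close>] unfolding P1_def g1_def K_def
      by (simp add: Y1_Suc Y2_Suc Sh_Suc)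
    have inj: "inj_on g1 {(p,s,y). (bob_rec s \<or> calvin_rec s) \<or> y = None}"
      unfolding g1_def inj_on_def by (auto split: if_splits)
    show ?thesis
      using step[OF ind finXP1 fin\<nu> Q inj] ms(1) A_eq[of m] by simp
  qed
  have step2: "ent (map_pmf (P2 (Suc m)) M) = ent (map_pmf (P2 m) M) + ent \<nu> + (1 - d2) * (A (Suc m) + I (Suc m))"
    if "m < n" for m
  proof -
    define g2 where "g2 = (\<lambda>((b::'a list option list, c::chstate list, d::'a list), s::chstate, y::'a list option).
       (b @ [y], c @ [s], d))"
    have ind: "map_pmf (\<lambda>\<omega>. ((Xv f (Suc m) \<omega>, P2 m \<omega>), K m \<omega>)) M = pair_pmf (map_pmf (\<lambda>\<omega>. (Xv f (Suc m) \<omega>, P2 m \<omega>)) M) \<nu>"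
      by (rule indep_gen[OF dec[OF that], of "\<lambda>\<omega>. (Xv f (Suc m) \<omega>, P2 m \<omega>)"])
         (simp add: P2_def tr_X tr_Y2 tr_Sh tr_W)
    have Q: "P2 (Suc m) \<omega> = g2 (P2 m \<omega>, K m \<omega>, if calvin_rec (K m \<omega>) then Some (Xv f (Suc m) \<omega>) else None)"
      if "\<omega> \<in> ?S" for \<omega>
      using lenS[OF that \<open>m < n\<close>] unfolding P2_def g2_def K_def
      by (simp add: Y2_Suc Sh_Suc)
    have inj: "inj_on g2 {(p,s,y). calvin_rec s \<or> y = None}"
      unfolding g2_def inj_on_def by auto
    show ?thesis
      using step[OF ind finXP2 fin\<nu> Q inj] ms(2) A_eq[of m] I_eq[of m] by simp
  qed
  have G0: "G 0 = 0"
  proof -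
    have e: "map_pmf (P1 0) M = map_pmf (Pair ([] :: 'a list option list)) (map_pmf (P2 0) M)"
      by (simp add: map_pmf_comp P1_def P2_def Y1_0)
    have "ent (map_pmf (Pair ([] :: 'a list option list)) (map_pmf (P2 0) M)) = ent (map_pmf (P2 0) M)"
      by (rule ent_inj) (auto simp: inj_on_def)
    then show ?thesis unfolding G_def e by simp
  qed
  have Gn: "G n \<ge> 0"
  proof -
    have "map_pmf (P2 n) M = map_pmf snd (map_pmf (P1 n) M)"
      by (simp add: map_pmf_comp P1_def P2_def)
    then show ?thesis unfolding G_def using ent_map_le[OF finP1[of n], of snd] by simp
  qed
  have Gk: "G k = (\<Sum>i=1..k. d2 * (1 - d1) * A i - (1 - d2) * I i)" if "k \<le> n" for k
    using that
  proof (induction k)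
    case 0 then show ?case using G0 by simp
  next
    case (Suc k)
    then have "k < n" by simp
    have "G (Suc k) = G k + d2 * (1 - d1) * A (Suc k) - (1 - d2) * I (Suc k)"
      unfolding G_def using step1[OF \<open>k < n\<close>] step2[OF \<open>k < n\<close>] by (simp add: algebra_simps)
    then show ?case using Suc by simp
  qed
  have "0 \<le> (\<Sum>i=1..n. d2 * (1 - d1) * A i - (1 - d2) * I i)" using Gk[of n] Gn by simp
  moreover have "(\<Sum>i=1..n. d2 * (1 - d1) * A i - (1 - d2) * I i) =
      d2 * (1 - d1) * (\<Sum>i=1..n. A i) - (1 - d2) * (\<Sum>i=1..n. I i)"
    by (simp add: sum_subtractf sum_distrib_left)
  ultimately have "(1 - d2) * (\<Sum>i=1..n. I i) \<le> d2 * (1 - d1) * (\<Sum>i=1..n. A i)" by linarith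
  then have key: "(1 - d2) * (\<Sum>i=1..n. I i) \<le> ((1 - d1) * d2) * (\<Sum>i=1..n. A i)"
    by (metis mult.commute)
  have pos: "0 < (1 - d1) * d2" using assms(1-4) by simp
  have "(1 - d2) / ((1 - d1) * d2) * (\<Sum>i=1..n. I i) \<le> (\<Sum>i=1..n. A i)"
    using key pos by (simp add: field_simps)
  then show ?thesis unfolding A_def I_def by simp
qed


end
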